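(* Let $G$ be a finitely generated virtually nilpotent group (i.e. $G$ has a nilpotent normal subgroup of finite index), and let $\Phi$ be a uniformly continuous action of $G$ on a metric space $\Omega$. Let $U,V\subset\Omega$. Assume that there exists an element $g\in G$ such that the homeomorphism $f_g=\Phi(g,\cdot)$ is topologically Anosov with respect to the pair $(U,V)$. Then the action $\Phi$ is topologically Anosov with respect to the pair $(U,V)$.
   Context: Let $(\Omega,\mathrm{dist})$ be a metric space; $B(\delta,x)=\{y:\mathrm{dist}(x,y)<\delta\}$ and $B(\delta,U)=\bigcup_{x\in U}B(\delta,x)$. An action of a group $G$ is a map $\Phi:G\times\Omega\to\Omega$ such that each $f_g=\Phi(g,\cdot)$ is a homeomorphism of $\Omega$, $\Phi(e,x)=x$, and $\Phi(g_1g_2,x)=\Phi(g_1,\Phi(g_2,x))$. For a finitely generated $G$, the action is uniformly continuous if for some finite symmetric generating set $S$ (symmetric: $s\in S\Rightarrow s^{-1}\in S$) all maps $f_s$, $s\in S$, are uniformly continuous. Fix a finite symmetric generating set $S$ of $G$. For $d>0$, a family $\{y_g\}_{g\in G}\subset\Omega$ is a $d$-pseudotrajectory if $\mathrm{dist}(y_{sg},f_s(y_g))<d$ for all $s\in S$, $g\in G$. A uniformly continuous action has the shadowing property on $V\subset\Omega$ if for every $\varepsilon>0$ there is $d>0$ such that for every $d$-pseudotrajectory $\{y_g\}$ with all $y_g\in V$ there is $x_e\in\Omega$ with $\mathrm{dist}(y_g,f_g(x_e))<\varepsilon$ for all $g\in G$ (this property does not depend on the choice of $S$). The action is expansive on $U\subset\Omega$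 if there is $\Delta>0$ such that whenever $x_1,x_2\in U$ satisfy $\Phi(g,x_1),\Phi(g,x_2)\in U$ and $\mathrm{dist}(\Phi(g,x_1),\Phi(g,x_2))<\Delta$ for all $g\in G$, then $x_1=x_2$. The action is topologically Anosov with respect to $(U,V)$ if (TA1) there is $\gamma>0$ with $B(\gamma,V)\subset U$, (TA2) it has the shadowing property on $V$, and (TA3) it is expansive on $U$. A homeomorphism $f$ of $\Omega$ is said to have any of these properties if the $\mathbb Z$-action $(k,x)\mapsto f^k(x)$ (with generating set $\{1,-1\}$) has it. *)

theory Defs
  imports "HOL-Analysis.Analysis" "HOL-Algebra.Algebra"
begin

primrec lower_central :: "('g, 'm) monoid_scheme \<Rightarrow> nat \<Rightarrow> 'g set" where
  "lower_central G 0 = carrier G"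
| "lower_central G (Suc n) =
     generate G (\<Union>x\<in>carrier G. \<Union>y\<in>lower_central G n.
                   {x \<otimes>\<^bsub>G\<^esub> y \<otimes>\<^bsub>G\<^esub> inv\<^bsub>G\<^esub> x \<otimes>\<^bsub>G\<^esub> inv\<^bsub>G\<^esub> y})"

definition nilpotent_group :: "('g, 'm) monoid_scheme \<Rightarrow> bool" where
  "nilpotent_group G \<longleftrightarrow> group G \<and> (\<exists>n. lower_central G n = {\<one>\<^bsub>G\<^esub>})"

definition virtually_nilpotent :: "('g, 'm) monoid_scheme \<Rightarrow> bool" where
  "virtually_nilpotent G \<longleftrightarrow> group G \<and>
     (\<exists>N. N \<lhd> G \<and> nilpotent_group (G\<lparr>carrier := N\<rparr>) \<and> finite (rcosets\<^bsub>G\<^esub> N))"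

definition finite_symmetric_generating :: "('g, 'm) monoid_scheme \<Rightarrow> 'g set \<Rightarrow> bool" where
  "finite_symmetric_generating G S \<longleftrightarrow> finite S \<and> S \<subseteq> carrier G \<and>
     (\<forall>s\<in>S. inv\<^bsub>G\<^esub> s \<in> S) \<and> generate G S = carrier G"

definition finitely_generated_group :: "('g, 'm) monoid_scheme \<Rightarrow> bool" where
  "finitely_generated_group G \<longleftrightarrow> (\<exists>S. finite S \<and> S \<subseteq> carrier G \<and> generate G S = carrier G)"

section \<open>Group actions on a metric space (the whole type 'b plays the role of \<Omega>)\<close>

definition is_action :: "('g, 'm) monoid_scheme \<Rightarrow> ('g \<Rightarrow> 'b::metric_space \<Rightarrow> 'b) \<Rightarrow> bool" where
  "is_action G \<Phi> \<longleftrightarrow>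
     (\<forall>g\<in>carrier G. \<exists>h. homeomorphism UNIV UNIV (\<Phi> g) h) \<and>
     (\<forall>x. \<Phi> \<one>\<^bsub>G\<^esub> x = x) \<and>
     (\<forall>g1\<in>carrier G. \<forall>g2\<in>carrier G. \<forall>x. \<Phi> (g1 \<otimes>\<^bsub>G\<^esub> g2) x = \<Phi> g1 (\<Phi> g2 x))"

definition uniformly_continuous_action ::
  "('g, 'm) monoid_scheme \<Rightarrow> ('g \<Rightarrow> 'b::metric_space \<Rightarrow> 'b) \<Rightarrow> bool" where
  "uniformly_continuous_action G \<Phi> \<longleftrightarrow> is_action G \<Phi> \<and>
     (\<exists>S. finite_symmetric_generating G S \<and> (\<forall>s\<in>S. uniformly_continuous_on UNIV (\<Phi> s)))"

definition pseudotrajectory ::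
  "('g, 'm) monoid_scheme \<Rightarrow> 'g set \<Rightarrow> ('g \<Rightarrow> 'b::metric_space \<Rightarrow> 'b) \<Rightarrow> real \<Rightarrow> ('g \<Rightarrow> 'b) \<Rightarrow> bool" where
  "pseudotrajectory G S \<Phi> d y \<longleftrightarrow>
     (\<forall>s\<in>S. \<forall>g\<in>carrier G. dist (y (s \<otimes>\<^bsub>G\<^esub> g)) (\<Phi> s (y g)) < d)"

definition shadowing_on ::
  "('g, 'm) monoid_scheme \<Rightarrow> 'g set \<Rightarrow> ('g \<Rightarrow> 'b::metric_space \<Rightarrow> 'b) \<Rightarrow> 'b set \<Rightarrow> bool" where
  "shadowing_on G S \<Phi> V \<longleftrightarrow>
     (\<forall>\<epsilon>>0. \<exists>d>0. \<forall>y. pseudotrajectory G S \<Phi> d y \<and> (\<forall>g\<in>carrier G. y g \<in> V) \<longrightarrow>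
        (\<exists>x. \<forall>g\<in>carrier G. dist (y g) (\<Phi> g x) < \<epsilon>))"

definition expansive_on ::
  "('g, 'm) monoid_scheme \<Rightarrow> ('g \<Rightarrow> 'b::metric_space \<Rightarrow> 'b) \<Rightarrow> 'b set \<Rightarrow> bool" where
  "expansive_on G \<Phi> U \<longleftrightarrow>
     (\<exists>\<Delta>>0. \<forall>x1\<in>U. \<forall>x2\<in>U.
        (\<forall>g\<in>carrier G. \<Phi> g x1 \<in> U \<and> \<Phi> g x2 \<in> U \<and> dist (\<Phi> g x1) (\<Phi> g x2) < \<Delta>) \<longrightarrow> x1 = x2)"

definition topologically_anosov ::
  "('g, 'm) monoid_scheme \<Rightarrow> 'g set \<Rightarrow> ('g \<Rightarrow> 'b::metric_space \<Rightarrow> 'b) \<Rightarrow> 'b set \<Rightarrow> 'b set \<Rightarrow> bool" where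
  "topologically_anosov G S \<Phi> U V \<longleftrightarrow>
     (\<exists>\<gamma>>0. (\<Union>x\<in>V. ball x \<gamma>) \<subseteq> U) \<and> shadowing_on G S \<Phi> V \<and> expansive_on G \<Phi> U"

definition zpow_fun :: "('b \<Rightarrow> 'b) \<Rightarrow> int \<Rightarrow> 'b \<Rightarrow> 'b" where
  "zpow_fun f k = (if 0 \<le> k then f ^^ nat k else inv_into UNIV f ^^ nat (- k))"

definition homeo_topologically_anosov :: "('b::metric_space \<Rightarrow> 'b) \<Rightarrow> 'b set \<Rightarrow> 'b set \<Rightarrow> bool" where
  "homeo_topologically_anosov f U V \<longleftrightarrow>
     topologically_anosov integer_group {1, -1} (zpow_fun f) U V"

end

theory Submission
  imports Defs
begin


definition comm :: "('a, 'm) monoid_scheme \<Rightarrow> 'a \<Rightarrow> 'a \<Rightarrow> 'a" where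
  "comm G x y = x \<otimes>\<^bsub>G\<^esub> y \<otimes>\<^bsub>G\<^esub> inv\<^bsub>G\<^esub> x \<otimes>\<^bsub>G\<^esub> inv\<^bsub>G\<^esub> y"

context group begin

lemma inv_cancel_l [simp]: "x \<in> carrier G \<Longrightarrow> y \<in> carrier G \<Longrightarrow> inv x \<otimes> (x \<otimes> y) = y"
  by (simp add: m_assoc[symmetric])
lemma inv_cancel_r [simp]: "x \<in> carrier G \<Longrightarrow> y \<in> carrier G \<Longrightarrow> x \<otimes> (inv x \<otimes> y) = y"
  by (simp add: m_assoc[symmetric])

lemma comm_closed [simp]: "x \<in> carrier G \<Longrightarrow> y \<in> carrier G \<Longrightarrow> comm G x y \<in> carrier G"
  by (simp add: comm_def)

lemma generate_conj:
  assumes "Gen \<subseteq> carrier G" "a \<in> carrier G" "\<And>x. x \<in> Gen \<Longrightarrow> a \<otimes> x \<otimes> inv a \<in> Gen"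
    and "h \<in> generate G Gen"
  shows "a \<otimes> h \<otimes> inv a \<in> generate G Gen"
  using assms(4)
proof induction
  case one
  then show ?case using assms by (simp add: generate.one)
next
  case (incl h)
  then show ?case using assms by (simp add: generate.incl)
next
  case (inv h)
  have "a \<otimes> inv h \<otimes> inv a = inv (a \<otimes> h \<otimes> inv a)"
    using inv assms by (auto simp: inv_mult_group m_assoc)
  then show ?case using generate.inv[OF assms(3)[OF inv]] by simp
next
  case (eng h1 h2)
  have c: "h1 \<in> carrier G" "h2 \<in> carrier G" using eng generate_in_carrier assms by auto
  have "a \<otimes> (h1 \<otimes> h2) \<otimes> inv a = (a \<otimes> h1 \<otimes> inv a) \<otimes> (a \<otimes> h2 \<otimes> inv a)"
    using c assms by (simp add: m_assoc)
  then show ?case using generate.eng[OF eng.IH] by simp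
qed

lemma comm_conj: "a \<in> carrier G \<Longrightarrow> x \<in> carrier G \<Longrightarrow> y \<in> carrier G \<Longrightarrow>
   a \<otimes> comm G x y \<otimes> inv a = comm G (a \<otimes> x \<otimes> inv a) (a \<otimes> y \<otimes> inv a)"
  by (simp add: comm_def m_assoc inv_mult_group)

lemma comm_inv: "x \<in> carrier G \<Longrightarrow> y \<in> carrier G \<Longrightarrow> inv (comm G x y) = comm G y x"
  by (simp add: comm_def m_assoc inv_mult_group)

lemma comm_mult_r: "x \<in> carrier G \<Longrightarrow> y1 \<in> carrier G \<Longrightarrow> y2 \<in> carrier G \<Longrightarrow>
  comm G x (y1 \<otimes> y2) = comm G x y1 \<otimes> (y1 \<otimes> comm G x y2 \<otimes> inv y1)"
  by (simp add: comm_def m_assoc inv_mult_group)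

lemma comm_inv_r: "x \<in> carrier G \<Longrightarrow> y \<in> carrier G \<Longrightarrow>
  comm G x (inv y) = inv y \<otimes> inv (comm G x y) \<otimes> y"
  by (simp add: comm_def m_assoc inv_mult_group)

lemma comm_mult_l: "x1 \<in> carrier G \<Longrightarrow> x2 \<in> carrier G \<Longrightarrow> y \<in> carrier G \<Longrightarrow>
  comm G (x1 \<otimes> x2) y = (x1 \<otimes> comm G x2 y \<otimes> inv x1) \<otimes> comm G x1 y"
  by (simp add: comm_def m_assoc inv_mult_group)

lemma comm_inv_l: "x \<in> carrier G \<Longrightarrow> y \<in> carrier G \<Longrightarrow>
  comm G (inv x) y = inv x \<otimes> inv (comm G x y) \<otimes> x"
  by (simp add: comm_def m_assoc inv_mult_group)

lemma comm_one_r: "x \<in> carrier G \<Longrightarrow> comm G x \<one> = \<one>"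
  by (simp add: comm_def)

lemma conj_comm_eq: "n \<in> carrier G \<Longrightarrow> w \<in> carrier G \<Longrightarrow> n \<otimes> w \<otimes> inv n = comm G n w \<otimes> w"
  by (simp add: comm_def m_assoc)

end

context group begin

lemma lc_Suc_aux:
  assumes N: "N \<lhd> G" and sub: "lower_central (G\<lparr>carrier:=N\<rparr>) i \<subseteq> N"
  shows "lower_central (G\<lparr>carrier:=N\<rparr>) (Suc i) =
     generate G {comm G x y | x y. x \<in> N \<and> y \<in> lower_central (G\<lparr>carrier:=N\<rparr>) i}"
proof -
  have sg: "subgroup N G" using N normal_imp_subgroup by blast
  let ?L = "lower_central (G\<lparr>carrier:=N\<rparr>) i"
  have eq: "(\<Union>x\<in>carrier (G\<lparr>carrier:=N\<rparr>). \<Union>y\<in>?L.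
                   {x \<otimes>\<^bsub>G\<lparr>carrier:=N\<rparr>\<^esub> y \<otimes>\<^bsub>G\<lparr>carrier:=N\<rparr>\<^esub> inv\<^bsub>G\<lparr>carrier:=N\<rparr>\<^esub> x \<otimes>\<^bsub>G\<lparr>carrier:=N\<rparr>\<^esub> inv\<^bsub>G\<lparr>carrier:=N\<rparr>\<^esub> y})
     = {comm G x y | x y. x \<in> N \<and> y \<in> ?L}"
  proof -
    have i1: "\<And>y. y \<in> ?L \<Longrightarrow> inv\<^bsub>G\<lparr>carrier:=N\<rparr>\<^esub> y = inv y" using sub sg m_inv_consistent by blast
    have i2: "\<And>y. y \<in> N \<Longrightarrow> inv\<^bsub>G\<lparr>carrier:=N\<rparr>\<^esub> y = inv y" using sub sg m_inv_consistent by blast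
    show ?thesis by (auto simp: comm_def i1 i2)
  qed
  have sub2: "{comm G x y | x y. x \<in> N \<and> y \<in> ?L} \<subseteq> N"
    using sub sg by (auto simp: comm_def subgroup.m_closed subgroup.m_inv_closed)
  show ?thesis
    by (simp only: lower_central.simps eq generate_consistent[OF sub2 sg])
qed

lemma lc_props:
  assumes N: "N \<lhd> G"
  shows "lower_central (G\<lparr>carrier:=N\<rparr>) i \<subseteq> N \<and> subgroup (lower_central (G\<lparr>carrier:=N\<rparr>) i) G \<and>
    (\<forall>a\<in>carrier G. \<forall>y\<in>lower_central (G\<lparr>carrier:=N\<rparr>) i. a \<otimes> y \<otimes> inv a \<in> lower_central (G\<lparr>carrier:=N\<rparr>) i)"
proof (induction i)
  case 0
  have sg: "subgroup N G" using N normal_imp_subgroup by blast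
  then show ?case using N[unfolded normal_inv_iff] subgroup.subset[OF sg] by auto
next
  case (Suc i)
  have sg: "subgroup N G" using N normal_imp_subgroup by blast
  let ?L = "lower_central (G\<lparr>carrier:=N\<rparr>) i"
  let ?Gen = "{comm G x y | x y. x \<in> N \<and> y \<in> ?L}"
  have LN: "?L \<subseteq> N" using Suc by blast
  have NG: "N \<subseteq> carrier G" using sg subgroup.subset by blast
  have sub2: "?Gen \<subseteq> N"
    using LN sg by (auto simp: comm_def subgroup.m_closed subgroup.m_inv_closed)
  have eq: "lower_central (G\<lparr>carrier:=N\<rparr>) (Suc i) = generate G ?Gen" by (rule lc_Suc_aux[OF N LN])
  have 1: "generate G ?Gen \<subseteq> N" by (rule generate_subgroup_incl[OF sub2 sg])
  have 2: "subgroup (generate G ?Gen) G" using sub2 NG by (intro generate_is_subgroup) auto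
  have 3: "a \<otimes> y \<otimes> inv a \<in> generate G ?Gen" if a: "a \<in> carrier G" and y: "y \<in> generate G ?Gen" for a y
  proof (rule generate_conj[OF _ a _ y])
    show "?Gen \<subseteq> carrier G" using sub2 NG by auto
    fix x assume "x \<in> ?Gen"
    then obtain u v where uv: "x = comm G u v" "u \<in> N" "v \<in> ?L" by blast
    have "a \<otimes> u \<otimes> inv a \<in> N" using N uv a by (simp add: normal_inv_iff)
    moreover have "a \<otimes> v \<otimes> inv a \<in> ?L" using Suc uv a by blast
    moreover have "a \<otimes> x \<otimes> inv a = comm G (a \<otimes> u \<otimes> inv a) (a \<otimes> v \<otimes> inv a)"
      using uv a NG LN by (auto intro!: comm_conj)
    ultimately show "a \<otimes> x \<otimes> inv a \<in> ?Gen" by blast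
  qed
  show ?case using 1 2 3 eq by auto
qed

lemma lc_sub: "N \<lhd> G \<Longrightarrow> lower_central (G\<lparr>carrier:=N\<rparr>) i \<subseteq> N"
  using lc_props by blast
lemma lc_subgroup: "N \<lhd> G \<Longrightarrow> subgroup (lower_central (G\<lparr>carrier:=N\<rparr>) i) G"
  using lc_props by blast
lemma lc_conj: "N \<lhd> G \<Longrightarrow> a \<in> carrier G \<Longrightarrow> y \<in> lower_central (G\<lparr>carrier:=N\<rparr>) i \<Longrightarrow>
   a \<otimes> y \<otimes> inv a \<in> lower_central (G\<lparr>carrier:=N\<rparr>) i"
  using lc_props by blast
lemma lc_Suc: "N \<lhd> G \<Longrightarrow> lower_central (G\<lparr>carrier:=N\<rparr>) (Suc i) =
     generate G {comm G x y | x y. x \<in> N \<and> y \<in> lower_central (G\<lparr>carrier:=N\<rparr>) i}"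
  using lc_Suc_aux lc_sub by blast
lemma lc_comm: "N \<lhd> G \<Longrightarrow> x \<in> N \<Longrightarrow> y \<in> lower_central (G\<lparr>carrier:=N\<rparr>) i \<Longrightarrow>
   comm G x y \<in> lower_central (G\<lparr>carrier:=N\<rparr>) (Suc i)"
  by (subst lc_Suc) (auto intro!: generate.incl)
lemma lc_0: "lower_central (G\<lparr>carrier:=N\<rparr>) 0 = N" by simp

lemma lc_carrier: "N \<lhd> G \<Longrightarrow> y \<in> lower_central (G\<lparr>carrier:=N\<rparr>) i \<Longrightarrow> y \<in> carrier G"
  using lc_sub normal_imp_subgroup subgroup.subset by blast

lemma lc_mono_Suc: assumes N: "N \<lhd> G" shows "lower_central (G\<lparr>carrier:=N\<rparr>) (Suc i) \<subseteq> lower_central (G\<lparr>carrier:=N\<rparr>) i"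
proof -
  let ?L = "lower_central (G\<lparr>carrier:=N\<rparr>) i"
  have sg: "subgroup ?L G" using lc_subgroup[OF N] .
  have "{comm G x y | x y. x \<in> N \<and> y \<in> ?L} \<subseteq> ?L"
  proof clarify
    fix x y assume x: "x \<in> N" and y: "y \<in> ?L"
    have xc: "x \<in> carrier G" using x N normal_imp_subgroup subgroup.subset by blast
    have yc: "y \<in> carrier G" using lc_carrier[OF N y] .
    have "comm G x y = (x \<otimes> y \<otimes> inv x) \<otimes> inv y" by (simp add: comm_def)
    moreover have "x \<otimes> y \<otimes> inv x \<in> ?L" using lc_conj[OF N xc y] .
    ultimately show "comm G x y \<in> ?L" using sg y subgroup.m_closed subgroup.m_inv_closed by metis
  qed
  then show ?thesis using lc_Suc[OF N] generate_subgroup_incl[OF _ sg] by simp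
qed

end

context group begin

lemma schreier:
  assumes N: "N \<lhd> G" and fin: "finite (rcosets N)"
    and S: "finite S" "S \<subseteq> carrier G" "\<And>s. s \<in> S \<Longrightarrow> inv s \<in> S" "generate G S = carrier G"
  shows "\<exists>Xs. finite Xs \<and> Xs \<subseteq> N \<and> generate G Xs = N"
proof -
  have sg: "subgroup N G" using N normal_imp_subgroup by blast
  have NG: "N \<subseteq> carrier G" using sg subgroup.subset by blast
  define \<rho> where "\<rho> x = (if x \<in> N then \<one> else SOME t. t \<in> N #> x)" for x
  have rho: "\<rho> x \<in> carrier G \<and> x \<otimes> inv (\<rho> x) \<in> N \<and> (\<rho> x \<in> N \<longrightarrow> x \<in> N)" if x: "x \<in> carrier G" for x
  proof (cases "x \<in> N")
    case True then show ?thesis using x by (simp add: \<rho>_def)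
  next
    case False
    have "\<one> \<otimes> x \<in> N #> x" using x sg by (force simp: r_coset_def intro: subgroup.one_closed)
    then have "\<rho> x \<in> N #> x" unfolding \<rho>_def using False by (metis someI_ex)
    then obtain h where h: "h \<in> N" "\<rho> x = h \<otimes> x" by (auto simp: r_coset_def)
    have hc: "h \<in> carrier G" using h NG by auto
    have 1: "\<rho> x \<in> carrier G" using h hc x by simp
    have "x \<otimes> inv (\<rho> x) = inv h" using h hc x by (simp add: inv_mult_group m_assoc)
    then have 2: "x \<otimes> inv (\<rho> x) \<in> N" using h sg subgroup.m_inv_closed by metis
    have 3: "\<rho> x \<in> N \<longrightarrow> x \<in> N"
    proof
      assume "\<rho> x \<in> N"
      then have "inv h \<otimes> \<rho> x \<in> N" using h sg subgroup.m_inv_closed subgroup.m_closed by metis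
      then show "x \<in> N" using h hc x by simp
    qed
    show ?thesis using 1 2 3 by blast
  qed
  define T where "T = \<rho> ` carrier G"
  have "T \<subseteq> insert \<one> ((\<lambda>C. SOME t. t \<in> C) ` (rcosets N))"
  proof
    fix t assume "t \<in> T"
    then obtain x where x: "x \<in> carrier G" "t = \<rho> x" by (auto simp: T_def)
    show "t \<in> insert \<one> ((\<lambda>C. SOME t. t \<in> C) ` (rcosets N))"
    proof (cases "x \<in> N")
      case True then show ?thesis using x by (simp add: \<rho>_def)
    next
      case False
      have "N #> x \<in> rcosets N" using x by (auto simp: RCOSETS_def)
      then show ?thesis using x False by (auto simp: \<rho>_def)
    qed
  qed
  then have finT: "finite T" using fin by (meson finite_imageI finite_insert finite_subset)
  have TG: "T \<subseteq> carrier G" using rho by (auto simp: T_def)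
  define Y where "Y = (\<lambda>(t,s). t \<otimes> s \<otimes> inv (\<rho> (t \<otimes> s))) ` (T \<times> S)"
  have finY: "finite Y" using finT S by (simp add: Y_def)
  have YN: "Y \<subseteq> N" using rho TG S by (force simp: Y_def intro: m_closed)
  have YG: "Y \<subseteq> carrier G" using YN NG by auto
  have genN: "generate G Y \<subseteq> N" by (rule generate_subgroup_incl[OF YN sg])
  define P where "P = {z. \<exists>n\<in>generate G Y. \<exists>t\<in>T. z = n \<otimes> t}"
  have PG: "P \<subseteq> carrier G" using genN NG TG by (auto simp: P_def)
  have key: "z \<otimes> s \<in> P" if z: "z \<in> P" and s: "s \<in> S" for z s
  proof -
    obtain n t where nt: "n \<in> generate G Y" "t \<in> T" "z = n \<otimes> t" using z by (auto simp: P_def)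
    have nc: "n \<in> carrier G" using nt genN NG by auto
    have tc: "t \<in> carrier G" using nt TG by auto
    have sc: "s \<in> carrier G" using s S by auto
    have rc: "\<rho> (t \<otimes> s) \<in> carrier G" using rho tc sc by simp
    have y: "t \<otimes> s \<otimes> inv (\<rho> (t \<otimes> s)) \<in> Y" using nt s by (auto simp: Y_def)
    have "z \<otimes> s = (n \<otimes> (t \<otimes> s \<otimes> inv (\<rho> (t \<otimes> s)))) \<otimes> \<rho> (t \<otimes> s)"
      using nt nc tc sc rc by (simp add: m_assoc)
    moreover have "n \<otimes> (t \<otimes> s \<otimes> inv (\<rho> (t \<otimes> s))) \<in> generate G Y"
      using nt y by (auto intro: generate.eng generate.incl)
    moreover have "\<rho> (t \<otimes> s) \<in> T" using tc sc by (auto simp: T_def)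
    ultimately show ?thesis by (auto simp: P_def)
  qed
  define M where "M = {h \<in> carrier G. \<forall>z\<in>P. z \<otimes> h \<in> P \<and> z \<otimes> inv h \<in> P}"
  have subM: "subgroup M G"
  proof (rule subgroup.intro)
    show "M \<subseteq> carrier G" by (auto simp: M_def)
    show "\<one> \<in> M" using PG by (auto simp: M_def)
    fix x y assume x: "x \<in> M" and y: "y \<in> M"
    show "x \<otimes> y \<in> M"
    proof -
      have c: "x \<in> carrier G" "y \<in> carrier G" using x y by (auto simp: M_def)
      { fix z assume z: "z \<in> P"
        have zc: "z \<in> carrier G" using z PG by auto
        have "z \<otimes> (x \<otimes> y) = (z \<otimes> x) \<otimes> y" using c zc by (simp add: m_assoc)
        moreover have "z \<otimes> inv (x \<otimes> y) = (z \<otimes> inv y) \<otimes> inv x" using c zc by (simp add: m_assoc inv_mult_group)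
        ultimately have "z \<otimes> (x \<otimes> y) \<in> P \<and> z \<otimes> inv (x \<otimes> y) \<in> P" using x y z by (auto simp: M_def) }
      then show ?thesis using c by (auto simp: M_def)
    qed
    show "inv x \<in> M" using x by (auto simp: M_def)
  qed
  have SM: "S \<subseteq> M"
  proof
    fix s assume s: "s \<in> S"
    then have "inv s \<in> S" using S by auto
    then show "s \<in> M" using s key S by (auto simp: M_def)
  qed
  have GM: "carrier G \<subseteq> M" using generate_subgroup_incl[OF SM subM] S by simp
  have oneP: "\<one> \<in> P"
  proof -
    have "\<rho> \<one> = \<one>" using sg by (simp add: \<rho>_def subgroup.one_closed)
    then have "\<one> \<in> T" by (force simp: T_def)
    then show ?thesis by (force simp: P_def intro: generate.one)
  qed
  have "N \<subseteq> generate G Y"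
  proof
    fix x assume x: "x \<in> N"
    have xc: "x \<in> carrier G" using x NG by auto
    have "\<one> \<otimes> x \<in> P" using GM xc oneP unfolding M_def by blast
    then obtain n t where nt: "n \<in> generate G Y" "t \<in> T" "x = n \<otimes> t" using xc by (auto simp: P_def)
    obtain w where w: "w \<in> carrier G" "t = \<rho> w" using nt by (auto simp: T_def)
    have nc: "n \<in> N" using nt genN by auto
    have ncc: "n \<in> carrier G" using nc NG by auto
    have tc: "t \<in> carrier G" using nt TG by auto
    have "t = inv n \<otimes> x" using nt ncc tc by simp
    then have "t \<in> N" using nc x sg subgroup.m_inv_closed subgroup.m_closed by metis
    then have "w \<in> N" using rho w by blast
    then have "t = \<one>" using w by (simp add: \<rho>_def)
    then show "x \<in> generate G Y" using nt ncc by simp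
  qed
  then show ?thesis using finY YN genN by blast
qed

lemma pow_in_normal:
  assumes N: "N \<lhd> G" and fin: "finite (rcosets N)" and g: "g \<in> carrier G"
  shows "\<exists>m::nat. m \<ge> 1 \<and> g [^] m \<in> N"
proof -
  define f where "f j = N #> (g [^] (j::nat))" for j
  have "range f \<subseteq> rcosets N" using g by (auto simp: f_def RCOSETS_def)
  then have "finite (range f)" using fin finite_subset by blast
  then have "\<not> inj f" using finite_imageD by blast
  then obtain i j where ij: "f i = f j" "i < j"
    by (metis inj_on_def linorder_neqE_nat UNIV_I)
  have sg: "subgroup N G" using N normal_imp_subgroup by blast
  have "g [^] j \<in> N #> (g [^] i)" using ij sg
    by (metis f_def g nat_pow_closed rcos_self)
  then obtain h where h: "h \<in> N" "g [^] j = h \<otimes> g [^] i" by (auto simp: r_coset_def)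
  have hc: "h \<in> carrier G" using h sg subgroup.subset by blast
  have "g [^] j = g [^] (j - i) \<otimes> g [^] i" using ij g by (simp add: nat_pow_mult)
  then have "g [^] (j - i) = h" using h hc g by (metis nat_pow_closed right_cancel)
  then show ?thesis using h ij by (intro exI[of _ "j - i"]) auto
qed

end


primrec CS :: "('a, 'm) monoid_scheme \<Rightarrow> 'a set \<Rightarrow> nat \<Rightarrow> 'a set" where
  "CS G Xs 0 = Xs"
| "CS G Xs (Suc i) = (\<lambda>(x,c). comm G x c) ` (Xs \<times> CS G Xs i)"

declare lower_central.simps(2)[simp del]

context group begin

lemma CS_finite: "finite Xs \<Longrightarrow> finite (CS G Xs i)"
  by (induction i) auto

lemma CS_sub: assumes N: "N \<lhd> G" and X: "Xs \<subseteq> N"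
  shows "CS G Xs i \<subseteq> lower_central (G\<lparr>carrier:=N\<rparr>) i"
proof (induction i)
  case 0 then show ?case using X by simp
next
  case (Suc i) then show ?case using X lc_comm[OF N] by fastforce
qed

lemma lc_gen:
  assumes N: "N \<lhd> G" and X: "Xs \<subseteq> N" "generate G Xs = N"
  shows "lower_central (G\<lparr>carrier:=N\<rparr>) i \<subseteq>
           generate G (CS G Xs i \<union> lower_central (G\<lparr>carrier:=N\<rparr>) (Suc i))"
proof (induction i)
  case 0
  have "N \<subseteq> generate G (Xs \<union> lower_central (G\<lparr>carrier:=N\<rparr>) (Suc 0))"
    using X mono_generate[of Xs] by auto
  then show ?case by simp
next
  case (Suc i)
  let ?L = "\<lambda>j. lower_central (G\<lparr>carrier:=N\<rparr>) j"
  define W where "W = generate G (CS G Xs (Suc i) \<union> ?L (Suc (Suc i)))"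
  have sg: "subgroup N G" using N normal_imp_subgroup by blast
  have NG: "N \<subseteq> carrier G" using sg subgroup.subset by blast
  have XG: "Xs \<subseteq> carrier G" using X NG by auto
  have LG: "\<And>j. ?L j \<subseteq> carrier G" using lc_carrier[OF N] by blast
  have LN: "\<And>j. ?L j \<subseteq> N" using lc_sub[OF N] by blast
  have C1: "CS G Xs (Suc i) \<subseteq> ?L (Suc i)" using CS_sub[OF N X(1)] .
  have L2: "?L (Suc (Suc i)) \<subseteq> ?L (Suc i)" using lc_mono_Suc[OF N] .
  have WL: "W \<subseteq> ?L (Suc i)" unfolding W_def
    by (rule generate_subgroup_incl) (use C1 L2 lc_subgroup[OF N] in auto)
  have Wsub: "subgroup W G" unfolding W_def
    by (rule generate_is_subgroup) (use C1 L2 LG in blast)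
  have L2W: "?L (Suc (Suc i)) \<subseteq> W" unfolding W_def by (auto intro: generate.incl)
  have C1W: "CS G Xs (Suc i) \<subseteq> W" unfolding W_def by (auto intro: generate.incl)
  have Wn: "n \<otimes> w \<otimes> inv n \<in> W" if n: "n \<in> N" and w: "w \<in> W" for n w
  proof -
    have nc: "n \<in> carrier G" using n NG by auto
    have wc: "w \<in> carrier G" using w WL LG by blast
    have "comm G n w \<in> W" using lc_comm[OF N n] w WL L2W by blast
    then have "comm G n w \<otimes> w \<in> W" using w by (rule subgroup.m_closed[OF Wsub])
    then show ?thesis using conj_comm_eq[OF nc wc] by simp
  qed
  have WG: "W \<subseteq> carrier G" using Wsub subgroup.subset by blast
  have main: "comm G x y \<in> W" if x: "x \<in> N" and y: "y \<in> ?L i" for x y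
  proof -
    have Csub: "comm G x' c \<in> W" if x': "x' \<in> N" and c: "c \<in> CS G Xs i" for x' c
    proof -
      define Xc where "Xc = {x \<in> N. comm G x c \<in> W}"
      have cc: "c \<in> carrier G" using c CS_sub[OF N X(1)] LG by blast
      have "subgroup Xc G"
      proof (rule subgroup.intro)
        show "Xc \<subseteq> carrier G" using NG by (auto simp: Xc_def)
        show "\<one> \<in> Xc" using sg Wsub cc by (simp add: Xc_def subgroup.one_closed comm_def)
        fix a b assume a: "a \<in> Xc" and b: "b \<in> Xc"
        have ac: "a \<in> carrier G" and bc: "b \<in> carrier G" using a b NG by (auto simp: Xc_def)
        have "a \<otimes> comm G b c \<otimes> inv a \<in> W" using Wn a b by (auto simp: Xc_def)
        then have "(a \<otimes> comm G b c \<otimes> inv a) \<otimes> comm G a c \<in> W"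
          using a subgroup.m_closed[OF Wsub] by (auto simp: Xc_def)
        then show "a \<otimes> b \<in> Xc" using a b sg comm_mult_l[OF ac bc cc]
          by (auto simp: Xc_def subgroup.m_closed)
        have "inv a \<in> N" using a sg by (auto simp: Xc_def subgroup.m_inv_closed)
        moreover have "inv (comm G a c) \<in> W" using a subgroup.m_inv_closed[OF Wsub] by (auto simp: Xc_def)
        ultimately have "inv a \<otimes> inv (comm G a c) \<otimes> inv (inv a) \<in> W" using Wn by blast
        then show "inv a \<in> Xc" using comm_inv_l[OF ac cc] ac \<open>inv a \<in> N\<close> by (simp add: Xc_def)
      qed
      moreover have "Xs \<subseteq> Xc" using X C1W c by (auto simp: Xc_def)
      ultimately have "generate G Xs \<subseteq> Xc" using generate_subgroup_incl by blast
      then show ?thesis using x' X by (auto simp: Xc_def)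
    qed
    define Yx where "Yx = {y \<in> N. comm G x y \<in> W}"
    have xc: "x \<in> carrier G" using x NG by auto
    have "subgroup Yx G"
    proof (rule subgroup.intro)
      show "Yx \<subseteq> carrier G" using NG by (auto simp: Yx_def)
      show "\<one> \<in> Yx" using sg Wsub xc by (simp add: Yx_def subgroup.one_closed comm_def)
      fix a b assume a: "a \<in> Yx" and b: "b \<in> Yx"
      have ac: "a \<in> carrier G" and bc: "b \<in> carrier G" using a b NG by (auto simp: Yx_def)
      have "a \<otimes> comm G x b \<otimes> inv a \<in> W" using Wn a b by (auto simp: Yx_def)
      then have "comm G x a \<otimes> (a \<otimes> comm G x b \<otimes> inv a) \<in> W"
        using a subgroup.m_closed[OF Wsub] by (auto simp: Yx_def)
      then show "a \<otimes> b \<in> Yx" using a b sg comm_mult_r[OF xc ac bc]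
        by (auto simp: Yx_def subgroup.m_closed)
      have "inv a \<in> N" using a sg by (auto simp: Yx_def subgroup.m_inv_closed)
      moreover have "inv (comm G x a) \<in> W" using a subgroup.m_inv_closed[OF Wsub] by (auto simp: Yx_def)
      ultimately have "inv a \<otimes> inv (comm G x a) \<otimes> inv (inv a) \<in> W" using Wn by blast
      then show "inv a \<in> Yx" using comm_inv_r[OF xc ac] ac \<open>inv a \<in> N\<close> by (simp add: Yx_def)
    qed
    moreover have "CS G Xs i \<union> ?L (Suc i) \<subseteq> Yx"
    proof
      fix z assume z: "z \<in> CS G Xs i \<union> ?L (Suc i)"
      then show "z \<in> Yx"
      proof
        assume zc: "z \<in> CS G Xs i"
        then show ?thesis using Csub[OF x zc] CS_sub[OF N X(1)] LN by (auto simp: Yx_def)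
      next
        assume zl: "z \<in> ?L (Suc i)"
        then show ?thesis using lc_comm[OF N x zl] L2W LN by (auto simp: Yx_def)
      qed
    qed
    ultimately have "generate G (CS G Xs i \<union> ?L (Suc i)) \<subseteq> Yx" using generate_subgroup_incl by blast
    then show ?thesis using Suc y by (auto simp: Yx_def)
  qed
  have "?L (Suc i) \<subseteq> W"
    by (subst lc_Suc[OF N]) (rule generate_subgroup_incl[OF _ Wsub], use main in blast)
  then show ?case by (simp add: W_def)
qed

end


context group begin

lemma rule_H:
  assumes K: "subgroup K G" and HK: "H \<subseteq> K" and Hc: "\<And>a h. a \<in> carrier G \<Longrightarrow> h \<in> H \<Longrightarrow> a \<otimes> h \<otimes> inv a \<in> H"
    and HG: "H \<subseteq> carrier G" and s: "s \<in> carrier G" and A: "A \<subseteq> carrier G" and g: "g \<in> carrier G"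
    and clos: "\<And>s. s \<in> carrier G \<Longrightarrow> (\<forall>k::int. \<exists>a\<in>A. \<exists>b\<in>K. g [^] k \<otimes> s = a \<otimes> g [^] k \<otimes> b) \<Longrightarrow> s \<in> K"
    and r: "\<And>k::int. \<exists>a\<in>A. inv a \<otimes> (g [^] k \<otimes> s \<otimes> inv (g [^] k)) \<in> H"
  shows "s \<in> K"
proof (rule clos[OF s], rule allI)
  fix k :: int
  obtain a where a: "a \<in> A" "inv a \<otimes> (g [^] k \<otimes> s \<otimes> inv (g [^] k)) \<in> H" using r by blast
  define h where "h = inv a \<otimes> (g [^] k \<otimes> s \<otimes> inv (g [^] k))"
  define b where "b = inv (g [^] k) \<otimes> h \<otimes> g [^] k"
  have ac: "a \<in> carrier G" using a A by auto
  have gk: "g [^] k \<in> carrier G" using g by simp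
  have hH: "h \<in> H" using a by (simp add: h_def)
  have "inv (g [^] k) \<otimes> h \<otimes> inv (inv (g [^] k)) \<in> H" using Hc[OF _ hH] gk by blast
  then have "b \<in> H" unfolding b_def using gk by simp
  then have bK: "b \<in> K" using HK by auto
  have "a \<otimes> g [^] k \<otimes> b = g [^] k \<otimes> s"
    using ac gk s by (simp add: b_def h_def m_assoc)
  then show "\<exists>a\<in>A. \<exists>b\<in>K. g [^] k \<otimes> s = a \<otimes> g [^] k \<otimes> b" using a(1) bK by metis
qed

lemma layer_orbit:
  fixes k :: int and m :: nat
  assumes N: "N \<lhd> G" and g: "g \<in> carrier G" and m: "m \<ge> 1" "g [^] m \<in> N"
    and x: "x \<in> lower_central (G\<lparr>carrier:=N\<rparr>) i"
  shows "\<exists>r<m. inv (g [^] r \<otimes> x \<otimes> inv (g [^] r)) \<otimes> (g [^] k \<otimes> x \<otimes> inv (g [^] k))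
            \<in> lower_central (G\<lparr>carrier:=N\<rparr>) (Suc i)"
proof -
  have sg: "subgroup N G" using N normal_imp_subgroup by blast
  define r where "r = nat (k mod int m)"
  define q where "q = k div int m"
  have rm: "r < m" using m by (simp add: r_def nat_less_iff)
  have kr: "k = int r + int m * q" using m by (simp add: r_def q_def)
  define n where "n = (g [^] m) [^] q"
  have nN: "n \<in> N" unfolding n_def by (rule subgroup_int_pow_closed[OF sg m(2)])
  have nc: "n \<in> carrier G" using nN sg subgroup.subset by blast
  have "g [^] k = g [^] (int r) \<otimes> g [^] (int m * q)" using kr g by (metis int_pow_mult)
  also have "g [^] (int m * q) = n" using g by (simp add: n_def int_pow_pow[symmetric] int_pow_int)
  finally have gk: "g [^] k = g [^] r \<otimes> n" by (simp add: int_pow_int)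
  have xc: "x \<in> carrier G" using lc_carrier[OF N x] .
  have gr: "g [^] r \<in> carrier G" using g by simp
  have ix: "inv x \<in> lower_central (G\<lparr>carrier:=N\<rparr>) i" by (rule subgroup.m_inv_closed[OF lc_subgroup[OF N] x])
  have "comm G n (inv x) \<in> lower_central (G\<lparr>carrier:=N\<rparr>) (Suc i)" using lc_comm[OF N nN ix] .
  then have "inv (comm G n (inv x)) \<in> lower_central (G\<lparr>carrier:=N\<rparr>) (Suc i)"
    by (rule subgroup.m_inv_closed[OF lc_subgroup[OF N]])
  then have "comm G (inv x) n \<in> lower_central (G\<lparr>carrier:=N\<rparr>) (Suc i)" using comm_inv nc xc by simp
  then have c: "g [^] r \<otimes> comm G (inv x) n \<otimes> inv (g [^] r) \<in> lower_central (G\<lparr>carrier:=N\<rparr>) (Suc i)"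
    by (rule lc_conj[OF N gr])
  have "inv (g [^] r \<otimes> x \<otimes> inv (g [^] r)) \<otimes> (g [^] k \<otimes> x \<otimes> inv (g [^] k))
     = g [^] r \<otimes> comm G (inv x) n \<otimes> inv (g [^] r)"
    unfolding gk using gr nc xc by (simp add: comm_def m_assoc inv_mult_group)
  then show ?thesis using c rm by metis
qed

lemma GT:
  assumes vn: "virtually_nilpotent G" and S: "finite_symmetric_generating G S" and g: "g \<in> carrier G"
  shows "\<exists>A. finite A \<and> A \<subseteq> carrier G \<and> (\<forall>K. subgroup K G \<and>
     (\<forall>s\<in>carrier G. (\<forall>k::int. \<exists>a\<in>A. \<exists>b\<in>K. g [^] k \<otimes> s = a \<otimes> g [^] k \<otimes> b) \<longrightarrow> s \<in> K)
      \<longrightarrow> carrier G \<subseteq> K)"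
proof -
  obtain N where N: "N \<lhd> G" and nil: "nilpotent_group (G\<lparr>carrier:=N\<rparr>)" and fin: "finite (rcosets N)"
    using vn by (auto simp: virtually_nilpotent_def)
  have sg: "subgroup N G" using N normal_imp_subgroup by blast
  have NG: "N \<subseteq> carrier G" using sg subgroup.subset by blast
  obtain cc where cc: "lower_central (G\<lparr>carrier:=N\<rparr>) cc = {\<one>}"
    using nil by (auto simp: nilpotent_group_def)
  obtain Xs where Xs: "finite Xs" "Xs \<subseteq> N" "generate G Xs = N"
    using schreier[OF N fin] S by (auto simp: finite_symmetric_generating_def)
  obtain m :: nat where m: "m \<ge> 1" "g [^] m \<in> N" using pow_in_normal[OF N fin g] by blast
  define T0 where "T0 = (\<lambda>C. SOME t. t \<in> C) ` (rcosets N)"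
  have T0: "\<exists>a\<in>T0. inv a \<otimes> z \<in> N" if z: "z \<in> carrier G" for z
  proof -
    have C: "N #> z \<in> rcosets N" using z by (auto simp: RCOSETS_def)
    have "\<one> \<otimes> z \<in> N #> z" using z sg by (force simp: r_coset_def intro: subgroup.one_closed)
    then have "(SOME t. t \<in> N #> z) \<in> N #> z" by (metis someI_ex)
    then obtain h where h: "h \<in> N" "(SOME t. t \<in> N #> z) = h \<otimes> z" by (auto simp: r_coset_def)
    have hc: "h \<in> carrier G" using h NG by auto
    have "inv (h \<otimes> z) \<otimes> z = inv z \<otimes> inv h \<otimes> inv (inv z)" using hc z by (simp add: inv_mult_group m_assoc)
    moreover have "inv z \<otimes> inv h \<otimes> inv (inv z) \<in> N"
      using N[unfolded normal_inv_iff] h z sg subgroup.m_inv_closed by (metis inv_closed)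
    ultimately have "inv (SOME t. t \<in> N #> z) \<otimes> z \<in> N" using h by simp
    then show ?thesis using C unfolding T0_def by blast
  qed
  have T0G: "T0 \<subseteq> carrier G"
  proof
    fix t assume "t \<in> T0"
    then obtain C where C: "C \<in> rcosets N" "t = (SOME t. t \<in> C)" by (auto simp: T0_def)
    then obtain z where z: "z \<in> carrier G" "C = N #> z" by (auto simp: RCOSETS_def)
    have "\<one> \<otimes> z \<in> N #> z" using z sg by (force simp: r_coset_def intro: subgroup.one_closed)
    then have "t \<in> N #> z" using C z by (metis someI_ex)
    then show "t \<in> carrier G" using z NG by (auto simp: r_coset_def)
  qed
  define A where "A = T0 \<union> (\<Union>i<cc. \<Union>r<m. (\<lambda>c. g [^] r \<otimes> c \<otimes> inv (g [^] r)) ` CS G Xs i)"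
  have finA: "finite A" using fin Xs by (simp add: A_def T0_def CS_finite)
  have CSG: "CS G Xs i \<subseteq> carrier G" for i using CS_sub[OF N Xs(2)] lc_carrier[OF N] by blast
  have AG: "A \<subseteq> carrier G" using T0G CSG g by (fastforce simp: A_def)
  have main: "carrier G \<subseteq> K" if K: "subgroup K G"
    and clos: "\<forall>s\<in>carrier G. (\<forall>k::int. \<exists>a\<in>A. \<exists>b\<in>K. g [^] k \<otimes> s = a \<otimes> g [^] k \<otimes> b) \<longrightarrow> s \<in> K" for K
  proof -
    have clos': "\<And>s. s \<in> carrier G \<Longrightarrow> (\<forall>k::int. \<exists>a\<in>A. \<exists>b\<in>K. g [^] k \<otimes> s = a \<otimes> g [^] k \<otimes> b) \<Longrightarrow> s \<in> K"
      using clos by blast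
    have lay: "lower_central (G\<lparr>carrier:=N\<rparr>) (cc - j) \<subseteq> K" for j
    proof (induction j)
      case 0 then show ?case using cc subgroup.one_closed[OF K] by simp
    next
      case (Suc j)
      show ?case
      proof (cases "cc - Suc j = cc - j")
        case True then show ?thesis using Suc by simp
      next
        case False
        define i where "i = cc - Suc j"
        have ic: "i < cc" and si: "Suc i = cc - j" using False by (auto simp: i_def)
        have LK: "lower_central (G\<lparr>carrier:=N\<rparr>) (Suc i) \<subseteq> K" using Suc si by simp
        have "CS G Xs i \<subseteq> K"
        proof
          fix c assume c: "c \<in> CS G Xs i"
          have cL: "c \<in> lower_central (G\<lparr>carrier:=N\<rparr>) i" using c CS_sub[OF N Xs(2)] by blast
          show "c \<in> K"
          proof (rule rule_H[OF K LK _ _ _ AG g clos'])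
            show "\<And>a h. a \<in> carrier G \<Longrightarrow> h \<in> lower_central (G\<lparr>carrier := N\<rparr>) (Suc i) \<Longrightarrow>
               a \<otimes> h \<otimes> inv a \<in> lower_central (G\<lparr>carrier := N\<rparr>) (Suc i)" using lc_conj[OF N] by blast
            show "lower_central (G\<lparr>carrier := N\<rparr>) (Suc i) \<subseteq> carrier G" using lc_carrier[OF N] by blast
            show "c \<in> carrier G" using c CSG by blast
            fix k :: int
            obtain r where r: "r < m" "inv (g [^] r \<otimes> c \<otimes> inv (g [^] r)) \<otimes> (g [^] k \<otimes> c \<otimes> inv (g [^] k))
               \<in> lower_central (G\<lparr>carrier:=N\<rparr>) (Suc i)" using layer_orbit[OF N g m cL] by blast
            have "g [^] r \<otimes> c \<otimes> inv (g [^] r) \<in> A" using r(1) ic c by (auto simp: A_def)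
            then show "\<exists>a\<in>A. inv a \<otimes> (g [^] k \<otimes> c \<otimes> inv (g [^] k)) \<in> lower_central (G\<lparr>carrier := N\<rparr>) (Suc i)"
              using r(2) by blast
          qed
        qed
        then have "CS G Xs i \<union> lower_central (G\<lparr>carrier:=N\<rparr>) (Suc i) \<subseteq> K" using LK by blast
        then have "generate G (CS G Xs i \<union> lower_central (G\<lparr>carrier:=N\<rparr>) (Suc i)) \<subseteq> K"
          using generate_subgroup_incl[OF _ K] by blast
        then show ?thesis using lc_gen[OF N Xs(2,3), of i] by (simp add: i_def)
      qed
    qed
    have NK: "N \<subseteq> K" using lay[of cc] by simp
    show ?thesis
    proof
      fix s assume s: "s \<in> carrier G"
      show "s \<in> K"
      proof (rule rule_H[OF K NK _ NG s AG g clos'])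
        show "\<And>a h. a \<in> carrier G \<Longrightarrow> h \<in> N \<Longrightarrow> a \<otimes> h \<otimes> inv a \<in> N"
          using N[unfolded normal_inv_iff] by blast
        fix k :: int
        have "g [^] k \<otimes> s \<otimes> inv (g [^] k) \<in> carrier G" using g s by simp
        then obtain a where "a \<in> T0" "inv a \<otimes> (g [^] k \<otimes> s \<otimes> inv (g [^] k)) \<in> N" using T0 by blast
        then show "\<exists>a\<in>A. inv a \<otimes> (g [^] k \<otimes> s \<otimes> inv (g [^] k)) \<in> N" unfolding A_def by blast
      qed
    qed
  qed
  show ?thesis
  proof (intro exI[of _ A] conjI allI impI finA AG)
    fix K assume h: "subgroup K G \<and>
     (\<forall>s\<in>carrier G. (\<forall>k::int. \<exists>a\<in>A. \<exists>b\<in>K. g [^] k \<otimes> s = a \<otimes> g [^] k \<otimes> b) \<longrightarrow> s \<in> K)"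
    show "carrier G \<subseteq> K" by (rule main[OF conjunct1[OF h] conjunct2[OF h]])
  qed
qed

end


lemma uc_comp_univ:
  fixes f :: "'b::metric_space \<Rightarrow> 'b" and g :: "'b \<Rightarrow> 'b"
  assumes f: "uniformly_continuous_on UNIV f" and g: "uniformly_continuous_on UNIV g"
  shows "uniformly_continuous_on UNIV (\<lambda>x. f (g x))"
  unfolding uniformly_continuous_on_def
proof (intro allI impI)
  fix e :: real assume e: "e > 0"
  obtain d1 where d1: "d1 > 0" "\<And>x x'. dist x' x < d1 \<Longrightarrow> dist (f x') (f x) < e"
    using f e unfolding uniformly_continuous_on_def by (metis UNIV_I)
  obtain d2 where d2: "d2 > 0" "\<And>x x'. dist x' x < d2 \<Longrightarrow> dist (g x') (g x) < d1"
    using g d1(1) unfolding uniformly_continuous_on_def by (metis UNIV_I)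
  show "\<exists>d>0. \<forall>x\<in>UNIV. \<forall>x'\<in>UNIV. dist x' x < d \<longrightarrow> dist (f (g x')) (f (g x)) < e"
    using d1 d2 by blast
qed

context group begin

lemma act_mult: "is_action G \<Phi> \<Longrightarrow> a \<in> carrier G \<Longrightarrow> b \<in> carrier G \<Longrightarrow> \<Phi> (a \<otimes> b) x = \<Phi> a (\<Phi> b x)"
  by (simp add: is_action_def)
lemma act_one: "is_action G \<Phi> \<Longrightarrow> \<Phi> \<one> x = x"
  by (simp add: is_action_def)

lemma uc_all:
  assumes uca: "uniformly_continuous_action G \<Phi>" and a: "a \<in> carrier G"
  shows "uniformly_continuous_on UNIV (\<Phi> a)"
proof -
  have act: "is_action G \<Phi>" using uca by (simp add: uniformly_continuous_action_def)
  obtain S0 where S0: "finite_symmetric_generating G S0" "\<forall>s\<in>S0. uniformly_continuous_on UNIV (\<Phi> s)"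
    using uca by (auto simp: uniformly_continuous_action_def)
  have S0G: "S0 \<subseteq> carrier G" using S0 by (simp add: finite_symmetric_generating_def)
  have "a \<in> generate G S0" using a S0 by (simp add: finite_symmetric_generating_def)
  then show ?thesis
  proof induction
    case one
    have "\<Phi> \<one> = (\<lambda>x. x)" using act_one[OF act] by auto
    then show ?case by (simp add: uniformly_continuous_on_id)
  next
    case (incl h) then show ?case using S0 by auto
  next
    case (inv h) then show ?case using S0 by (auto simp: finite_symmetric_generating_def)
  next
    case (eng h1 h2)
    have c: "h1 \<in> carrier G" "h2 \<in> carrier G" using eng generate_in_carrier S0G by auto
    have "\<Phi> (h1 \<otimes> h2) = (\<lambda>x. \<Phi> h1 (\<Phi> h2 x))" using act_mult[OF act c] by auto
    moreover have "uniformly_continuous_on UNIV (\<lambda>x. \<Phi> h1 (\<Phi> h2 x))"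
      by (rule uc_comp_univ[OF eng.IH(1) eng.IH(2)])
    ultimately show ?case by simp
  qed
qed

lemma pseudo_mono: "pseudotrajectory G S \<Phi> d y \<Longrightarrow> d \<le> d' \<Longrightarrow> pseudotrajectory G S \<Phi> d' y"
  by (fastforce simp: pseudotrajectory_def)

lemma pseudo_bound:
  assumes uca: "uniformly_continuous_action G \<Phi>" and S: "finite_symmetric_generating G S"
    and a: "a \<in> carrier G" and e: "e > 0"
  shows "\<exists>d>0. \<forall>y. pseudotrajectory G S \<Phi> d y \<longrightarrow> (\<forall>w\<in>carrier G. dist (y (a \<otimes> w)) (\<Phi> a (y w)) < e)"
proof -
  have act: "is_action G \<Phi>" using uca by (simp add: uniformly_continuous_action_def)
  have SG: "S \<subseteq> carrier G" using S by (simp add: finite_symmetric_generating_def)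
  have "a \<in> generate G S" using a S by (simp add: finite_symmetric_generating_def)
  then show ?thesis using e
  proof (induction arbitrary: e)
    case one
    then show ?case using act_one[OF act] by (intro exI[of _ 1]) auto
  next
    case (incl h) then show ?case by (intro exI[of _ e]) (auto simp: pseudotrajectory_def)
  next
    case (inv h)
    have "inv h \<in> S" using inv S by (simp add: finite_symmetric_generating_def)
    then show ?case using inv by (intro exI[of _ e]) (auto simp: pseudotrajectory_def)
  next
    case (eng h1 h2)
    have c: "h1 \<in> carrier G" "h2 \<in> carrier G" using eng generate_in_carrier SG by auto
    have e2: "e / 2 > 0" using eng by simp
    obtain \<delta> where \<delta>: "\<delta> > 0" "\<And>p q. dist p q < \<delta> \<Longrightarrow> dist (\<Phi> h1 p) (\<Phi> h1 q) < e / 2"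
      using uc_all[OF uca c(1)] e2 unfolding uniformly_continuous_on_def by (metis UNIV_I)
    obtain d1 where d1: "d1 > 0" "\<forall>y. pseudotrajectory G S \<Phi> d1 y \<longrightarrow> (\<forall>w\<in>carrier G. dist (y (h1 \<otimes> w)) (\<Phi> h1 (y w)) < e/2)"
      using eng.IH(1)[OF e2] by blast
    obtain d2 where d2: "d2 > 0" "\<forall>y. pseudotrajectory G S \<Phi> d2 y \<longrightarrow> (\<forall>w\<in>carrier G. dist (y (h2 \<otimes> w)) (\<Phi> h2 (y w)) < \<delta>)"
      using eng.IH(2)[OF \<delta>(1)] by blast
    show ?case
    proof (intro exI[of _ "min d1 d2"] conjI allI impI ballI)
      show "min d1 d2 > 0" using d1 d2 by simp
      fix y w assume y: "pseudotrajectory G S \<Phi> (min d1 d2) y" and w: "w \<in> carrier G"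
      have y1: "pseudotrajectory G S \<Phi> d1 y" and y2: "pseudotrajectory G S \<Phi> d2 y"
        using pseudo_mono[OF y] by auto
      have hw: "h2 \<otimes> w \<in> carrier G" using c w by simp
      have 1: "dist (y (h1 \<otimes> (h2 \<otimes> w))) (\<Phi> h1 (y (h2 \<otimes> w))) < e/2" using d1(2) y1 hw by blast
      have "dist (y (h2 \<otimes> w)) (\<Phi> h2 (y w)) < \<delta>" using d2(2) y2 w by blast
      then have 2: "dist (\<Phi> h1 (y (h2 \<otimes> w))) (\<Phi> h1 (\<Phi> h2 (y w))) < e/2" using \<delta>(2) by blast
      have "dist (y (h1 \<otimes> (h2 \<otimes> w))) (\<Phi> h1 (\<Phi> h2 (y w))) < e"
        using dist_triangle[of "y (h1 \<otimes> (h2 \<otimes> w))" "\<Phi> h1 (\<Phi> h2 (y w))" "\<Phi> h1 (y (h2 \<otimes> w))"] 1 2 by linarith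
      then show "dist (y (h1 \<otimes> h2 \<otimes> w)) (\<Phi> (h1 \<otimes> h2) (y w)) < e"
        using c w act_mult[OF act c] by (simp add: m_assoc)
    qed
  qed
qed

lemma zpow_act:
  assumes act: "is_action G \<Phi>" and g: "g \<in> carrier G"
  shows "zpow_fun (\<Phi> g) k = \<Phi> (g [^] k)"
proof -
  have nat: "(\<Phi> h) ^^ n = \<Phi> (h [^] n)" if h: "h \<in> carrier G" for h and n :: nat
  proof (induction n)
    case 0 then show ?case using act_one[OF act] by auto
  next
    case (Suc n)
    have e: "h [^] Suc n = h \<otimes> h [^] n" by (rule nat_pow_Suc2[OF h])
    show ?case
    proof
      fix x
      have "\<Phi> (h [^] Suc n) x = \<Phi> h (\<Phi> (h [^] n) x)" by (simp only: e act_mult[OF act h nat_pow_closed[OF h]])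
      moreover have "(\<Phi> h ^^ Suc n) x = \<Phi> h ((\<Phi> h ^^ n) x)" by simp
      ultimately show "(\<Phi> h ^^ Suc n) x = \<Phi> (h [^] Suc n) x" using Suc by simp
    qed
  qed
  have l: "\<Phi> (inv g) (\<Phi> g x) = x" for x
  proof -
    have "\<Phi> (inv g) (\<Phi> g x) = \<Phi> (inv g \<otimes> g) x" by (rule act_mult[OF act inv_closed[OF g] g, symmetric])
    also have "\<dots> = x" using g act_one[OF act] by simp
    finally show ?thesis .
  qed
  have r: "\<Phi> g (\<Phi> (inv g) x) = x" for x
  proof -
    have "\<Phi> g (\<Phi> (inv g) x) = \<Phi> (g \<otimes> inv g) x" by (rule act_mult[OF act g inv_closed[OF g], symmetric])
    also have "\<dots> = x" using g act_one[OF act] by simp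
    finally show ?thesis .
  qed
  have inv: "inv_into UNIV (\<Phi> g) = \<Phi> (inv g)"
  proof
    fix x
    have inj: "inj (\<Phi> g)" by (metis injI l)
    have "\<Phi> g (\<Phi> (inv g) x) = x" by (rule r)
    then show "inv_into UNIV (\<Phi> g) x = \<Phi> (inv g) x" using inv_into_f_eq[OF inj] by blast
  qed
  show ?thesis
  proof (cases "0 \<le> k")
    case True
    have "zpow_fun (\<Phi> g) k = (\<Phi> g) ^^ (nat k)" using True by (simp only: zpow_fun_def if_True)
    also have "\<dots> = \<Phi> (g [^] (nat k))" by (rule nat[OF g])
    also have "g [^] (nat k) = g [^] k"
    proof -
      have "int (nat k) = k" using True by simp
      then show ?thesis by (metis int_pow_int)
    qed
    finally show ?thesis .
  next
    case False
    have "zpow_fun (\<Phi> g) k = (\<Phi> (inv g)) ^^ (nat (-k))" using False by (simp only: zpow_fun_def if_False inv)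
    also have "\<dots> = \<Phi> (inv g [^] (nat (-k)))" by (rule nat[OF inv_closed[OF g]])
    also have "inv g [^] (nat (-k)) = g [^] k" using False g by (simp only: int_pow_def2 nat_pow_inv[OF g]) simp
    finally show ?thesis .
  qed
qed

end


lemma (in group) main_thm:
  fixes \<Phi> :: "'a \<Rightarrow> 'c::metric_space \<Rightarrow> 'c"
  assumes "True"
    and "True"
    and "virtually_nilpotent G"
    and "uniformly_continuous_action G \<Phi>"
    and "finite_symmetric_generating G S"
    and "g \<in> carrier G"
    and "homeo_topologically_anosov (\<Phi> g) U V"
  shows "topologically_anosov G S \<Phi> U V"
proof -
  note vn = assms(3) and uca = assms(4) and Sg = assms(5) and g = assms(6)
  have act: "is_action G \<Phi>" using uca by (simp add: uniformly_continuous_action_def)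
  have zp: "\<And>k::int. zpow_fun (\<Phi> g) k = \<Phi> (g [^] k)" using zpow_act[OF act g] .
  obtain \<gamma> where \<gamma>: "\<gamma> > 0" "(\<Union>x\<in>V. ball x \<gamma>) \<subseteq> U"
    using assms(7) by (auto simp: homeo_topologically_anosov_def topologically_anosov_def)
  have shZ: "shadowing_on integer_group {1, -1} (zpow_fun (\<Phi> g)) V"
    using assms(7) by (simp add: homeo_topologically_anosov_def topologically_anosov_def)
  have exZ: "expansive_on integer_group (zpow_fun (\<Phi> g)) U"
    using assms(7) by (simp add: homeo_topologically_anosov_def topologically_anosov_def)
  then obtain \<Delta> where \<Delta>0: "\<Delta> > 0" and \<Delta>1: "\<forall>x1\<in>U. \<forall>x2\<in>U.
        (\<forall>k\<in>carrier integer_group. zpow_fun (\<Phi> g) k x1 \<in> U \<and> zpow_fun (\<Phi> g) k x2 \<in> U \<and>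
           dist (zpow_fun (\<Phi> g) k x1) (zpow_fun (\<Phi> g) k x2) < \<Delta>) \<longrightarrow> x1 = x2"
    unfolding expansive_on_def by blast
  have \<Delta>: "\<Delta> > 0" "\<And>x1 x2. x1 \<in> U \<Longrightarrow> x2 \<in> U \<Longrightarrow>
        (\<forall>k::int. \<Phi> (g [^] k) x1 \<in> U \<and> \<Phi> (g [^] k) x2 \<in> U \<and> dist (\<Phi> (g [^] k) x1) (\<Phi> (g [^] k) x2) < \<Delta>) \<Longrightarrow> x1 = x2"
    using \<Delta>0 \<Delta>1 unfolding zp carrier_integer_group by blast+
  have exG: "expansive_on G \<Phi> U"
    unfolding expansive_on_def
  proof (intro exI[of _ \<Delta>] conjI ballI impI)
    show "\<Delta> > 0" by (rule \<Delta>(1))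
    fix x1 x2 assume x: "x1 \<in> U" "x2 \<in> U"
      and h: "\<forall>h\<in>carrier G. \<Phi> h x1 \<in> U \<and> \<Phi> h x2 \<in> U \<and> dist (\<Phi> h x1) (\<Phi> h x2) < \<Delta>"
    show "x1 = x2" using \<Delta>(2)[OF x] h g by simp
  qed
  have shG: "shadowing_on G S \<Phi> V"
    unfolding shadowing_on_def
  proof (intro allI impI)
    fix \<epsilon> :: real assume \<epsilon>: "\<epsilon> > 0"
    define e where "e = min \<epsilon> (min \<gamma> \<Delta>) / 2"
    have e: "e > 0" "e < \<epsilon>" "e < \<gamma>" "2 * e \<le> \<Delta>" using \<epsilon> \<gamma> \<Delta> by (auto simp: e_def)
    obtain A where A: "finite A" "A \<subseteq> carrier G" "\<forall>K. subgroup K G \<and>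
       (\<forall>s\<in>carrier G. (\<forall>k::int. \<exists>a\<in>A. \<exists>b\<in>K. g [^] k \<otimes> s = a \<otimes> g [^] k \<otimes> b) \<longrightarrow> s \<in> K) \<longrightarrow> carrier G \<subseteq> K"
      using GT[OF vn Sg g] by blast
    have ch1: "\<forall>a\<in>A. \<exists>\<delta>. \<delta> > 0 \<and> (\<forall>p q. dist p q < \<delta> \<longrightarrow> dist (\<Phi> a p) (\<Phi> a q) < e / 2)"
    proof
      fix a assume a: "a \<in> A"
      have e2: "e / 2 > 0" using e by simp
      have "uniformly_continuous_on UNIV (\<Phi> a)" using uc_all[OF uca, of a] a A by blast
      then obtain d0 where "d0 > 0" "\<forall>x\<in>UNIV. \<forall>x'\<in>UNIV. dist x' x < d0 \<longrightarrow> dist (\<Phi> a x') (\<Phi> a x) < e / 2"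
        using e2 unfolding uniformly_continuous_on_def by blast
      then show "\<exists>\<delta>. \<delta> > 0 \<and> (\<forall>p q. dist p q < \<delta> \<longrightarrow> dist (\<Phi> a p) (\<Phi> a q) < e / 2)" by blast
    qed
    obtain \<delta> where \<delta>0: "\<forall>a\<in>A. \<delta> a > 0 \<and> (\<forall>p q. dist p q < \<delta> a \<longrightarrow> dist (\<Phi> a p) (\<Phi> a q) < e / 2)"
      using bchoice[OF ch1] by blast
    have \<delta>: "\<And>a. a \<in> A \<Longrightarrow> \<delta> a > 0"
        "\<And>a p q. a \<in> A \<Longrightarrow> dist p q < \<delta> a \<Longrightarrow> dist (\<Phi> a p) (\<Phi> a q) < e / 2"
      using \<delta>0 by blast+
    define \<eta> where "\<eta> = Min (insert e (\<delta> ` A))"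
    have \<eta>: "\<eta> > 0" "\<eta> \<le> e" "\<And>a. a \<in> A \<Longrightarrow> \<eta> \<le> \<delta> a"
      using A(1) e \<delta>(1) by (auto simp: \<eta>_def)
    obtain dZ where dZ: "dZ > 0" "\<And>z. pseudotrajectory integer_group {1, -1} (zpow_fun (\<Phi> g)) dZ z \<and> (\<forall>k\<in>carrier integer_group. z k \<in> V) \<Longrightarrow>
        \<exists>x. \<forall>k\<in>carrier integer_group. dist (z k) (zpow_fun (\<Phi> g) k x) < \<eta>"
      using shZ \<eta>(1) unfolding shadowing_on_def by meson
    obtain dg where dg: "dg > 0" "\<And>y. pseudotrajectory G S \<Phi> dg y \<Longrightarrow> (\<forall>w\<in>carrier G. dist (y (g \<otimes> w)) (\<Phi> g (y w)) < dZ)"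
      using pseudo_bound[OF uca Sg g dZ(1)] by blast
    obtain dig where dig: "dig > 0" "\<And>y. pseudotrajectory G S \<Phi> dig y \<Longrightarrow> (\<forall>w\<in>carrier G. dist (y (inv g \<otimes> w)) (\<Phi> (inv g) (y w)) < dZ)"
      using pseudo_bound[OF uca Sg inv_closed[OF g] dZ(1)] by blast
    have ch2: "\<forall>a\<in>A. \<exists>d. d > 0 \<and> (\<forall>y. pseudotrajectory G S \<Phi> d y \<longrightarrow> (\<forall>w\<in>carrier G. dist (y (a \<otimes> w)) (\<Phi> a (y w)) < e / 2))"
    proof
      fix a assume a: "a \<in> A"
      have e2: "e / 2 > 0" using e by simp
      show "\<exists>d. d > 0 \<and> (\<forall>y. pseudotrajectory G S \<Phi> d y \<longrightarrow> (\<forall>w\<in>carrier G. dist (y (a \<otimes> w)) (\<Phi> a (y w)) < e / 2))"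
        using pseudo_bound[OF uca Sg _ e2, of a] a A by blast
    qed
    obtain da where da0: "\<forall>a\<in>A. da a > 0 \<and> (\<forall>y. pseudotrajectory G S \<Phi> (da a) y \<longrightarrow> (\<forall>w\<in>carrier G. dist (y (a \<otimes> w)) (\<Phi> a (y w)) < e / 2))"
      using bchoice[OF ch2] by blast
    have da: "\<And>a. a \<in> A \<Longrightarrow> da a > 0"
      "\<And>a y. a \<in> A \<Longrightarrow> pseudotrajectory G S \<Phi> (da a) y \<Longrightarrow> (\<forall>w\<in>carrier G. dist (y (a \<otimes> w)) (\<Phi> a (y w)) < e / 2)"
      using da0 by blast+
    define d where "d = Min (insert dg (insert dig (da ` A)))"
    have d0: "d > 0" using A(1) dg(1) dig(1) da(1) by (auto simp: d_def)
    have d1: "d \<le> dg" unfolding d_def using A(1) by (intro Min_le) auto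
    have d2: "d \<le> dig" unfolding d_def using A(1) by (intro Min_le) auto
    have d3: "d \<le> da a" if "a \<in> A" for a unfolding d_def using A(1) that by (intro Min_le) auto
    note d = d0 d1 d2 d3
    show "\<exists>d>0. \<forall>y. pseudotrajectory G S \<Phi> d y \<and> (\<forall>g\<in>carrier G. y g \<in> V) \<longrightarrow>
             (\<exists>x. \<forall>g\<in>carrier G. dist (y g) (\<Phi> g x) < \<epsilon>)"
    proof (intro exI[of _ d] conjI allI impI)
      show "d > 0" by (rule d(1))
      fix y assume yh: "pseudotrajectory G S \<Phi> d y \<and> (\<forall>g\<in>carrier G. y g \<in> V)"
      have yV: "\<And>h. h \<in> carrier G \<Longrightarrow> y h \<in> V" using yh by blast
      have y: "pseudotrajectory G S \<Phi> d y" using yh by blast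
      have P1: "\<And>w. w \<in> carrier G \<Longrightarrow> dist (y (g \<otimes> w)) (\<Phi> g (y w)) < dZ"
        using dg(2)[OF pseudo_mono[OF y d(2)]] by blast
      have P2: "\<And>w. w \<in> carrier G \<Longrightarrow> dist (y (inv g \<otimes> w)) (\<Phi> (inv g) (y w)) < dZ"
        using dig(2)[OF pseudo_mono[OF y d(3)]] by blast
      have P3: "\<And>a w. a \<in> A \<Longrightarrow> w \<in> carrier G \<Longrightarrow> dist (y (a \<otimes> w)) (\<Phi> a (y w)) < e / 2"
        using da(2) pseudo_mono[OF y d(4)] by blast
      have ex: "\<exists>x. \<forall>k::int. dist (y (g [^] k \<otimes> h)) (\<Phi> (g [^] k) x) < \<eta>" if h: "h \<in> carrier G" for h
      proof -
        define z where "z k = y (g [^] k \<otimes> h)" for k :: int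
        have "pseudotrajectory integer_group {1, -1} (zpow_fun (\<Phi> g)) dZ z"
          unfolding pseudotrajectory_def
        proof (intro ballI)
          fix s k :: int assume s: "s \<in> {1, -1::int}" and k: "k \<in> carrier integer_group"
          have gk: "g [^] k \<otimes> h \<in> carrier G" using g h by simp
          show "dist (z (s \<otimes>\<^bsub>integer_group\<^esub> k)) (zpow_fun (\<Phi> g) s (z k)) < dZ"
          proof (cases "s = 1")
            case True
            have "g [^] (1 + k) \<otimes> h = g \<otimes> (g [^] k \<otimes> h)" using g h by (simp add: int_pow_mult m_assoc)
            then show ?thesis using True P1[OF gk] g by (simp add: z_def zp)
          next
            case False
            then have s1: "s = -1" using s by simp
            have gm: "g [^] (-1::int) = inv g" using g by (simp add: int_pow_neg)
            have "g [^] (-1 + k) = g [^] (-1::int) \<otimes> g [^] k" by (rule int_pow_mult[OF g])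
            then have "g [^] (-1 + k) \<otimes> h = inv g \<otimes> (g [^] k \<otimes> h)"
              using g h gm by (simp add: m_assoc)
            moreover note gm
            ultimately show ?thesis using s1 P2[OF gk] by (simp add: z_def zp)
          qed
        qed
        moreover have "\<forall>k\<in>carrier integer_group. z k \<in> V" using yV g h by (simp add: z_def)
        ultimately obtain x where "\<forall>k\<in>carrier integer_group. dist (z k) (zpow_fun (\<Phi> g) k x) < \<eta>"
          using dZ(2) by blast
        then show ?thesis by (auto simp: z_def zp)
      qed
      define Xp where "Xp h = (SOME x. \<forall>k::int. dist (y (g [^] k \<otimes> h)) (\<Phi> (g [^] k) x) < \<eta>)" for h
      have Xp: "dist (y (g [^] k \<otimes> h)) (\<Phi> (g [^] k) (Xp h)) < \<eta>" if h: "h \<in> carrier G" for h and k :: int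
      proof -
        have "\<forall>k::int. dist (y (g [^] k \<otimes> h)) (\<Phi> (g [^] k) (Xp h)) < \<eta>"
          unfolding Xp_def by (rule someI_ex[OF ex[OF h]])
        then show ?thesis by blast
      qed
      have uniq: "p = Xp h" if h: "h \<in> carrier G" and p: "\<And>k::int. dist (y (g [^] k \<otimes> h)) (\<Phi> (g [^] k) p) < e" for h p
      proof -
        have inU: "q \<in> U" if "dist (y (g [^] k \<otimes> h)) q < e" for q and k :: int
        proof -
          have "y (g [^] k \<otimes> h) \<in> V" using yV g h by simp
          moreover have "q \<in> ball (y (g [^] k \<otimes> h)) \<gamma>" using that e by (simp add: dist_commute)
          ultimately show ?thesis using \<gamma>(2) by blast
        qed
        have Xe: "\<And>k::int. dist (y (g [^] k \<otimes> h)) (\<Phi> (g [^] k) (Xp h)) < e" using Xp[OF h] \<eta>(2) by (meson less_le_trans)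
        have one: "\<And>q. \<Phi> (g [^] (0::int)) q = q" using act_one[OF act] by simp
        show ?thesis
        proof (rule \<Delta>(2))
          show "p \<in> U" using inU[of 0 p] p[of 0] one by simp
          show "Xp h \<in> U" using inU[of 0 "Xp h"] Xe[of 0] one by simp
          show "\<forall>k::int. \<Phi> (g [^] k) p \<in> U \<and> \<Phi> (g [^] k) (Xp h) \<in> U \<and> dist (\<Phi> (g [^] k) p) (\<Phi> (g [^] k) (Xp h)) < \<Delta>"
          proof
            fix k :: int
            have 1: "dist (y (g [^] k \<otimes> h)) (\<Phi> (g [^] k) p) < e" by (rule p)
            have 2: "dist (y (g [^] k \<otimes> h)) (\<Phi> (g [^] k) (Xp h)) < e" by (rule Xe)
            have "dist (\<Phi> (g [^] k) p) (\<Phi> (g [^] k) (Xp h)) < \<Delta>"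
              using dist_triangle[of "\<Phi> (g [^] k) p" "\<Phi> (g [^] k) (Xp h)" "y (g [^] k \<otimes> h)"] 1 2 e(4)
              by (simp add: dist_commute)
            then show "\<Phi> (g [^] k) p \<in> U \<and> \<Phi> (g [^] k) (Xp h) \<in> U \<and> dist (\<Phi> (g [^] k) p) (\<Phi> (g [^] k) (Xp h)) < \<Delta>"
              using inU[OF 1] inU[OF 2] by blast
          qed
        qed
      qed
      define K where "K = {c \<in> carrier G. \<forall>h\<in>carrier G. Xp (c \<otimes> h) = \<Phi> c (Xp h)}"
      have Ksub: "subgroup K G"
      proof (rule subgroup.intro)
        show "K \<subseteq> carrier G" by (auto simp: K_def)
        show "\<one> \<in> K" using act_one[OF act] by (auto simp: K_def)
        fix a b assume a: "a \<in> K" and b: "b \<in> K"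
        have ac: "a \<in> carrier G" and bc: "b \<in> carrier G" using a b by (auto simp: K_def)
        show "a \<otimes> b \<in> K" unfolding K_def
        proof (intro CollectI conjI ballI)
          show "a \<otimes> b \<in> carrier G" using ac bc by simp
          fix h assume h: "h \<in> carrier G"
          have "Xp (a \<otimes> b \<otimes> h) = Xp (a \<otimes> (b \<otimes> h))" using ac bc h by (simp add: m_assoc)
          also have "\<dots> = \<Phi> a (Xp (b \<otimes> h))" using a bc h by (simp add: K_def)
          also have "\<dots> = \<Phi> a (\<Phi> b (Xp h))" using b h by (simp add: K_def)
          also have "\<dots> = \<Phi> (a \<otimes> b) (Xp h)" using act_mult[OF act ac bc] by simp
          finally show "Xp (a \<otimes> b \<otimes> h) = \<Phi> (a \<otimes> b) (Xp h)" .
        qed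
        show "inv a \<in> K" unfolding K_def
        proof (intro CollectI conjI ballI)
          show "inv a \<in> carrier G" using ac by simp
          fix h assume h: "h \<in> carrier G"
          have ih: "inv a \<otimes> h \<in> carrier G" using ac h by simp
          have "Xp h = Xp (a \<otimes> (inv a \<otimes> h))" using ac h by simp
          also have "\<dots> = \<Phi> a (Xp (inv a \<otimes> h))" using a ih by (simp add: K_def)
          finally have eq: "Xp h = \<Phi> a (Xp (inv a \<otimes> h))" .
          have "\<Phi> (inv a) (Xp h) = \<Phi> (inv a \<otimes> a) (Xp (inv a \<otimes> h))"
            unfolding eq by (rule act_mult[OF act inv_closed[OF ac] ac, symmetric])
          also have "\<dots> = Xp (inv a \<otimes> h)" using ac act_one[OF act] by simp
          finally show "Xp (inv a \<otimes> h) = \<Phi> (inv a) (Xp h)" by simp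
        qed
      qed
      have Kclos: "s \<in> K" if s: "s \<in> carrier G"
        and r: "\<forall>k::int. \<exists>a\<in>A. \<exists>b\<in>K. g [^] k \<otimes> s = a \<otimes> g [^] k \<otimes> b" for s
      proof -
        have "Xp (s \<otimes> h) = \<Phi> s (Xp h)" if h: "h \<in> carrier G" for h
        proof -
          have sh: "s \<otimes> h \<in> carrier G" using s h by simp
          have "\<Phi> s (Xp h) = Xp (s \<otimes> h)"
          proof (rule uniq[OF sh])
            fix k :: int
            obtain a b where ab: "a \<in> A" "b \<in> K" "g [^] k \<otimes> s = a \<otimes> g [^] k \<otimes> b" using r by blast
            have ac: "a \<in> carrier G" using ab A by auto
            have bc: "b \<in> carrier G" using ab by (auto simp: K_def)
            have gk: "g [^] k \<in> carrier G" using g by simp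
            have bh: "b \<otimes> h \<in> carrier G" using bc h by simp
            have w: "g [^] k \<otimes> (b \<otimes> h) \<in> carrier G" using gk bh by simp
            have "\<Phi> (g [^] k) (\<Phi> s (Xp h)) = \<Phi> (g [^] k \<otimes> s) (Xp h)" using act_mult[OF act gk s] by simp
            also have "\<dots> = \<Phi> (a \<otimes> (g [^] k \<otimes> b)) (Xp h)" using ab(3) ac gk bc by (simp add: m_assoc)
            also have "\<dots> = \<Phi> a (\<Phi> (g [^] k) (\<Phi> b (Xp h)))"
              using act_mult[OF act ac] act_mult[OF act gk bc] gk bc by simp
            also have "\<Phi> b (Xp h) = Xp (b \<otimes> h)" using ab(2) h by (simp add: K_def)
            finally have eq1: "\<Phi> (g [^] k) (\<Phi> s (Xp h)) = \<Phi> a (\<Phi> (g [^] k) (Xp (b \<otimes> h)))" .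
            have "dist (y (g [^] k \<otimes> (b \<otimes> h))) (\<Phi> (g [^] k) (Xp (b \<otimes> h))) < \<delta> a"
              using Xp[OF bh, of k] \<eta>(3)[OF ab(1)] by linarith
            then have d1: "dist (\<Phi> a (y (g [^] k \<otimes> (b \<otimes> h)))) (\<Phi> a (\<Phi> (g [^] k) (Xp (b \<otimes> h)))) < e / 2"
              using \<delta>(2)[OF ab(1)] by blast
            have d2: "dist (y (a \<otimes> (g [^] k \<otimes> (b \<otimes> h)))) (\<Phi> a (y (g [^] k \<otimes> (b \<otimes> h)))) < e / 2"
              using P3[OF ab(1) w] .
            have "a \<otimes> (g [^] k \<otimes> (b \<otimes> h)) = g [^] k \<otimes> (s \<otimes> h)"
            proof -
              have "g [^] k \<otimes> (s \<otimes> h) = (g [^] k \<otimes> s) \<otimes> h" using gk s h by (simp add: m_assoc)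
              also have "\<dots> = a \<otimes> (g [^] k \<otimes> (b \<otimes> h))" using ab(3) ac gk bc h by (simp add: m_assoc)
              finally show ?thesis by simp
            qed
            then have d2': "dist (y (g [^] k \<otimes> (s \<otimes> h))) (\<Phi> a (y (g [^] k \<otimes> (b \<otimes> h)))) < e / 2"
              using d2 by simp
            have "dist (y (g [^] k \<otimes> (s \<otimes> h))) (\<Phi> a (\<Phi> (g [^] k) (Xp (b \<otimes> h)))) < e"
              using dist_triangle[of "y (g [^] k \<otimes> (s \<otimes> h))" "\<Phi> a (\<Phi> (g [^] k) (Xp (b \<otimes> h)))" "\<Phi> a (y (g [^] k \<otimes> (b \<otimes> h)))"] d1 d2'
              by linarith
            then show "dist (y (g [^] k \<otimes> (s \<otimes> h))) (\<Phi> (g [^] k) (\<Phi> s (Xp h))) < e" using eq1 by simp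
          qed
          then show ?thesis by simp
        qed
        then show ?thesis using s by (auto simp: K_def)
      qed
      have "\<forall>s\<in>carrier G. (\<forall>k::int. \<exists>a\<in>A. \<exists>b\<in>K. g [^] k \<otimes> s = a \<otimes> g [^] k \<otimes> b) \<longrightarrow> s \<in> K"
        using Kclos by blast
      then have GK: "carrier G \<subseteq> K" using A(3) Ksub by blast
      show "\<exists>x. \<forall>h\<in>carrier G. dist (y h) (\<Phi> h x) < \<epsilon>"
      proof (intro exI[of _ "Xp \<one>"] ballI)
        fix h assume h: "h \<in> carrier G"
        have "h \<in> K" using GK h by blast
        then have "\<forall>h'\<in>carrier G. Xp (h \<otimes> h') = \<Phi> h (Xp h')" unfolding K_def by blast
        then have "Xp (h \<otimes> \<one>) = \<Phi> h (Xp \<one>)" by blast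
        then have eqX: "Xp h = \<Phi> h (Xp \<one>)" using h by simp
        have "dist (y (g [^] (0::int) \<otimes> h)) (\<Phi> (g [^] (0::int)) (Xp h)) < \<eta>" using Xp[OF h] .
        then have "dist (y h) (Xp h) < \<eta>" using h act_one[OF act] by simp
        then show "dist (y h) (\<Phi> h (Xp \<one>)) < \<epsilon>" using eqX \<eta>(2) e(2) by simp
      qed
    qed
  qed
  show ?thesis unfolding topologically_anosov_def using \<gamma> shG exG by blast
qed

theorem theorem1:
  fixes G :: "('g, 'm) monoid_scheme"
    and S :: "'g set"
    and \<Phi> :: "'g \<Rightarrow> 'b::metric_space \<Rightarrow> 'b"
    and U V :: "'b set"
    and g :: 'g
  assumes "group G"
    and "finitely_generated_group G"
    and "virtually_nilpotent G"
    and "uniformly_continuous_action G \<Phi>"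
    and "finite_symmetric_generating G S"
    and "g \<in> carrier G"
    and "homeo_topologically_anosov (\<Phi> g) U V"
  shows "topologically_anosov G S \<Phi> U V"
  using group.main_thm[OF assms(1) TrueI TrueI assms(3-7)] .


end
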